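(* Let $p$ be a prime, $r=p^{h'}$ with $h'\ge1$, $l\ge1$ coprime to $r$, $d\in\{1,p,p^2\}$, $M,N^*\ge1$, and complex numbers $(\alpha_m)_{m\le M}$, $(\beta_n)_{n\le N^*}$ with $\alpha_m\ll_\varepsilon m^\varepsilon$, $\beta_n\ll_\varepsilon n^\varepsilon$ for every $\varepsilon>0$. Put $$B=\sum_{1\le m\le M}\sum_{1\le n\le N^*}\alpha_m\beta_n\frac{S(ldm,n;r)}{\sqrt r},\qquad S(a,b;r)=\sum_{x\ (\mathrm{mod}\ r),\ (x,r)=1}e\Big(\frac{ax+b\overline{x}}{r}\Big).$$ Then for every $\varepsilon>0$, $$B\ll_{\varepsilon,p}(MN^*r)^\varepsilon MN^*\min_{s\mid r}\Big(\Big(\frac{r}{N^*}\Big)^{1/2}+\Big(\frac sr\Big)^{1/4}+\Big(\frac{r}{M^2s}\Big)^{1/4}\Big).$$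
   Context: $e(z)=e^{2\pi iz}$; $\overline{x}$ denotes the inverse of $x$ modulo $r$. *)

theory Defs
  imports "HOL-Analysis.Analysis" "HOL-Number_Theory.Number_Theory"
begin

definition e_char :: "real \<Rightarrow> complex" where
  "e_char z = exp (2 * of_real pi * \<i> * of_real z)"

definition kloosterman :: "int \<Rightarrow> int \<Rightarrow> nat \<Rightarrow> complex" where
  "kloosterman a b r =
     (\<Sum>x\<in>{x. x < r \<and> coprime x r}.
        e_char (real_of_int (a * int x + b * modular_inverse (int r) (int x)) / real r))"

definition bilinB :: "(nat \<Rightarrow> complex) \<Rightarrow> (nat \<Rightarrow> complex) \<Rightarrow> nat \<Rightarrow> nat \<Rightarrow> nat \<Rightarrow> nat \<Rightarrow> nat \<Rightarrow> complex" where
  "bilinB \<alpha> \<beta> l d r M N =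
     (\<Sum>m=1..M. \<Sum>n=1..N. \<alpha> m * \<beta> n *
        kloosterman (int (l * d * m)) (int n) r / of_real (sqrt (real r)))"

end

theory Submission
  imports Defs
begin

lemma e_add: "e_char (x + y) = e_char x * e_char y"
  unfolding e_char_def by (simp add: distrib_left distrib_right exp_add)

lemma e_norm: "norm (e_char x) = 1"
  unfolding e_char_def by (simp add: norm_exp_eq_Re)

lemma e_cnj: "cnj (e_char x) = e_char (- x)"
  unfolding e_char_def by (simp add: exp_cnj)

lemma e_int_eq1: "e_char x = 1 \<longleftrightarrow> x \<in> \<int>"
proof -
  have "e_char x = 1 \<longleftrightarrow> (\<exists>n::int. 2*pi*x = of_int (2*n) * pi)"
    unfolding e_char_def exp_eq_1 by simp
  also have "\<dots> \<longleftrightarrow> (\<exists>n::int. x = of_int n)" by auto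
  also have "\<dots> \<longleftrightarrow> x \<in> \<int>" by (auto elim: Ints_cases)
  finally show ?thesis .
qed

lemma e_pow: "e_char x ^ n = e_char (real n * x)"
  unfolding e_char_def by (simp add: exp_of_nat_mult[symmetric] mult_ac)

lemma orth:
  assumes "r > 0"
  shows "(\<Sum>y<r. e_char (real_of_int k * real y / real r)) = (if int r dvd k then of_nat r else 0)"
proof -
  define z where "z = e_char (real_of_int k / real r)"
  have eq: "e_char (real_of_int k * real y / real r) = z ^ y" for y
    unfolding z_def e_pow by (simp add: mult_ac)
  have zr: "z ^ r = 1" unfolding z_def e_pow using assms by (simp add: e_int_eq1)
  have z1: "z = 1 \<longleftrightarrow> int r dvd k"
  proof -
    have "z = 1 \<longleftrightarrow> real_of_int k / real r \<in> \<int>" unfolding z_def e_int_eq1 ..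
    also have "\<dots> \<longleftrightarrow> int r dvd k"
    proof
      assume "real_of_int k / real r \<in> \<int>"
      then obtain n where "real_of_int k / real r = of_int n" by (auto elim: Ints_cases)
      hence "real_of_int k = of_int n * real r" using assms by (simp add: field_simps)
      hence "k = n * int r" by (metis of_int_eq_iff of_int_mult of_int_of_nat_eq)
      thus "int r dvd k" by simp
    next
      assume "int r dvd k" then obtain n where "k = int r * n" by auto
      thus "real_of_int k / real r \<in> \<int>" using assms by simp
    qed
    finally show ?thesis .
  qed
  show ?thesis unfolding eq sum_gp_strict using zr z1 by auto
qed

lemma card_pairs:
  assumes "finite I"
  shows "(\<Sum>i\<in>I. \<Sum>j\<in>I. (if P i j then 1 else 0::real)) = real (card {(i,j). i\<in>I \<and> j\<in>I \<and> P i j})"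
proof -
  have "(\<Sum>i\<in>I. \<Sum>j\<in>I. (if P i j then 1 else 0::real)) = (\<Sum>x\<in>I\<times>I. (if P (fst x) (snd x) then 1 else 0))"
    by (simp add: sum.cartesian_product split_beta)
  also have "\<dots> = real (card ((I\<times>I) \<inter> {x. P (fst x) (snd x)}))"
    using assms by (simp add: sum.If_cases)
  also have "(I\<times>I) \<inter> {x. P (fst x) (snd x)} = {(i,j). i\<in>I \<and> j\<in>I \<and> P i j}"
    by auto
  finally show ?thesis .
qed

lemma parseval:
  fixes f :: "nat \<Rightarrow> complex" and a :: "nat \<Rightarrow> int"
  assumes r: "r > 0" and fin: "finite I" and bd: "\<forall>i\<in>I. norm (f i) \<le> A"
  shows "(\<Sum>y<r. (norm (\<Sum>i\<in>I. f i * e_char (real_of_int (a i) * real y / real r)))^2)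
          \<le> real r * A^2 * real (card {(i,j). i\<in>I \<and> j\<in>I \<and> int r dvd a i - a j})"
proof -
  define W where "W y = (\<Sum>i\<in>I. f i * e_char (real_of_int (a i) * real y / real r))" for y
  have A0: "I \<noteq> {} \<Longrightarrow> A \<ge> 0" using bd by (meson ex_in_conv norm_ge_zero order_trans)
  have WW: "W y * cnj (W y) = (\<Sum>i\<in>I. \<Sum>j\<in>I. f i * cnj (f j) * e_char (real_of_int (a i - a j) * real y / real r))" for y
  proof -
    have "W y * cnj (W y) = (\<Sum>i\<in>I. \<Sum>j\<in>I. (f i * e_char (real_of_int (a i) * real y / real r)) * cnj (f j * e_char (real_of_int (a j) * real y / real r)))"
      unfolding W_def by (simp add: sum_product cnj_sum)
    also have "\<dots> = (\<Sum>i\<in>I. \<Sum>j\<in>I. f i * cnj (f j) * e_char (real_of_int (a i - a j) * real y / real r))"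
    proof (intro sum.cong refl)
      fix i j
      have "e_char (real_of_int (a i - a j) * real y / real r) = e_char (real_of_int (a i) * real y / real r) * e_char (- (real_of_int (a j) * real y / real r))"
        by (simp add: e_add[symmetric] diff_divide_distrib left_diff_distrib)
      thus "f i * e_char (real_of_int (a i) * real y / real r) * cnj (f j * e_char (real_of_int (a j) * real y / real r)) =
         f i * cnj (f j) * e_char (real_of_int (a i - a j) * real y / real r)"
        by (simp add: e_cnj)
    qed
    finally show ?thesis .
  qed
  have "complex_of_real (\<Sum>y<r. (norm (W y))^2) = (\<Sum>y<r. W y * cnj (W y))"
    by (simp only: of_real_sum complex_norm_square)
  also have "\<dots> = (\<Sum>i\<in>I. \<Sum>j\<in>I. f i * cnj (f j) * (\<Sum>y<r. e_char (real_of_int (a i - a j) * real y / real r)))"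
    unfolding WW by (simp add: sum_distrib_left sum.swap[of _ "{..<r}"])
  also have "\<dots> = (\<Sum>i\<in>I. \<Sum>j\<in>I. f i * cnj (f j) * (if int r dvd a i - a j then of_nat r else 0))"
    by (intro sum.cong refl) (simp only: orth[OF r])
  finally have eq: "complex_of_real (\<Sum>y<r. (norm (W y))^2) = \<dots>" .
  have "(\<Sum>y<r. (norm (W y))^2) = norm (complex_of_real (\<Sum>y<r. (norm (W y))^2))"
    by (simp only: norm_of_real abs_of_nonneg[OF sum_nonneg[OF zero_le_power2]])
  also have "\<dots> \<le> (\<Sum>i\<in>I. \<Sum>j\<in>I. norm (f i * cnj (f j) * (if int r dvd a i - a j then of_nat r else 0::complex)))"
    unfolding eq by (rule order_trans[OF norm_sum sum_mono]) (rule norm_sum)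
  also have "\<dots> \<le> (\<Sum>i\<in>I. \<Sum>j\<in>I. real r * A^2 * (if int r dvd a i - a j then 1 else 0))"
  proof (intro sum_mono)
    fix i j assume ij: "i \<in> I" "j \<in> I"
    have "norm (f i) * norm (f j) \<le> A * A"
      using bd ij by (intro mult_mono) (auto intro: order_trans[OF norm_ge_zero])
    hence "real r * (norm (f i) * norm (f j)) \<le> real r * (A * A)" by (simp add: mult_left_mono)
    thus "norm (f i * cnj (f j) * (if int r dvd a i - a j then of_nat r else 0::complex)) \<le> real r * A^2 * (if int r dvd a i - a j then 1 else 0)"
      by (auto simp: norm_mult power2_eq_square ac_simps)
  qed
  also have "\<dots> = real r * A^2 * (\<Sum>i\<in>I. \<Sum>j\<in>I. (if int r dvd a i - a j then 1 else 0))"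
    by (simp add: sum_distrib_left)
  also have "\<dots> = real r * A^2 * real (card {(i,j). i\<in>I \<and> j\<in>I \<and> int r dvd a i - a j})"
    using fin by (simp add: card_pairs)
  finally show ?thesis unfolding W_def .
qed

lemma count_one:
  assumes "r > 0" "k > 0"
  shows "real (card {j\<in>{1..X}. (k*j) mod r = c}) \<le> real k * real X / real r + 1"
proof -
  have inj: "inj_on (\<lambda>j. k*j div r) {j\<in>{1..X}. (k*j) mod r = c}"
  proof (rule inj_onI)
    fix x y assume x: "x \<in> {j\<in>{1..X}. (k*j) mod r = c}" and y: "y \<in> {j\<in>{1..X}. (k*j) mod r = c}"
      and e: "k*x div r = k*y div r"
    have "k*x = k*y" using x y e by (metis (mono_tags, lifting) div_mult_mod_eq mem_Collect_eq)
    thus "x = y" using assms by simp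
  qed
  have "card {j\<in>{1..X}. (k*j) mod r = c} \<le> card {0..k*X div r}"
    by (rule card_inj_on_le[OF inj]) (auto intro!: div_le_mono)
  hence "real (card {j\<in>{1..X}. (k*j) mod r = c}) \<le> real (k*X div r) + 1" by simp
  also have "real (k*X div r) \<le> real k * real X / real r" using of_nat_div_le_of_nat[of "k*X" r] by simp
  finally show ?thesis by simp
qed

lemma count_pairs:
  assumes "r > 0" "k > 0"
  shows "real (card {(i,j). i\<in>{1..X} \<and> j\<in>{1..X} \<and> (k*i) mod r = (k*j) mod r}) \<le> real X * (real k * real X / real r + 1)"
proof -
  have "{(i,j). i\<in>{1..X} \<and> j\<in>{1..X} \<and> (k*i) mod r = (k*j) mod r} = Sigma {1..X} (\<lambda>i. {j\<in>{1..X}. (k*j) mod r = (k*i) mod r})"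
    by auto
  hence "card {(i,j). i\<in>{1..X} \<and> j\<in>{1..X} \<and> (k*i) mod r = (k*j) mod r} = (\<Sum>i\<in>{1..X}. card {j\<in>{1..X}. (k*j) mod r = (k*i) mod r})"
    by (simp add: card_SigmaI)
  hence "real (card {(i,j). i\<in>{1..X} \<and> j\<in>{1..X} \<and> (k*i) mod r = (k*j) mod r}) = (\<Sum>i\<in>{1..X}. real (card {j\<in>{1..X}. (k*j) mod r = (k*i) mod r}))"
    by simp
  also have "\<dots> \<le> (\<Sum>i\<in>{1..X}. real k * real X / real r + 1)"
    by (rule sum_mono) (rule count_one[OF assms])
  also have "\<dots> = real X * (real k * real X / real r + 1)" by simp
  finally show ?thesis .
qed

definition ix :: "nat \<Rightarrow> nat \<Rightarrow> nat" where
  "ix r x = nat (modular_inverse (int r) (int x))"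

lemma ix_lt: "r > 0 \<Longrightarrow> ix r x < r"
  unfolding ix_def modular_inverse_def by (auto simp: nat_less_iff)

lemma ix_of: "r > 0 \<Longrightarrow> modular_inverse (int r) (int x) = int (ix r x)"
  unfolding ix_def modular_inverse_def by auto

lemma ix_inj: assumes "r > 0" shows "inj_on (ix r) {x. x < r \<and> coprime x r}"
proof (rule inj_onI)
  fix x y assume x: "x \<in> {x. x < r \<and> coprime x r}" and y: "y \<in> {x. x < r \<and> coprime x r}"
    and e: "ix r x = ix r y"
  define i where "i = modular_inverse (int r) (int x)"
  have i2: "i = modular_inverse (int r) (int y)" using e assms unfolding i_def by (simp add: ix_of)
  have cx: "[int x * i = 1] (mod int r)" unfolding i_def
    by (rule cong_modular_inverse1) (use x in auto)
  have cy: "[int y * i = 1] (mod int r)" unfolding i2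
    by (rule cong_modular_inverse1) (use y in auto)
  have "[int x = int x * (int y * i)] (mod int r)" using cong_scalar_left[OF cy, of "int x"] by (simp add: cong_sym)
  moreover have "[int y = int y * (int x * i)] (mod int r)" using cong_scalar_left[OF cx, of "int y"] by (simp add: cong_sym)
  ultimately have "[int x = int y] (mod int r)" by (metis cong_sym cong_trans mult.left_commute)
  hence "[x = y] (mod r)" by (simp add: cong_int_iff)
  thus "x = y" using x y by (simp add: cong_def)
qed

lemma bilin_eq:
  assumes r: "r > 0"
  shows "bilinB \<alpha> \<beta> l d r M N * complex_of_real (sqrt (real r)) =
     (\<Sum>x\<in>{x. x < r \<and> coprime x r}.
        (\<Sum>m\<in>{1..M}. \<alpha> m * e_char (real_of_int (int (l*d*m)) * real x / real r)) *
        (\<Sum>n\<in>{1..N}. \<beta> n * e_char (real_of_int (int n) * real (ix r x) / real r)))"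
proof -
  have sr: "complex_of_real (sqrt (real r)) \<noteq> 0" using r by simp
  have K: "kloosterman a b r = (\<Sum>x\<in>{x. x < r \<and> coprime x r}.
        e_char (real_of_int a * real x / real r) * e_char (real_of_int b * real (ix r x) / real r))" for a b
    unfolding kloosterman_def
  proof (intro sum.cong refl)
    fix x
    have "real_of_int (a * int x + b * modular_inverse (int r) (int x)) / real r =
          real_of_int a * real x / real r + real_of_int b * real (ix r x) / real r"
      using r by (simp add: ix_of add_divide_distrib)
    thus "e_char (real_of_int (a * int x + b * modular_inverse (int r) (int x)) / real r) =
      e_char (real_of_int a * real x / real r) * e_char (real_of_int b * real (ix r x) / real r)"
      by (simp add: e_add)
  qed
  have "bilinB \<alpha> \<beta> l d r M N * complex_of_real (sqrt (real r)) =
     (\<Sum>m=1..M. \<Sum>n=1..N. \<alpha> m * \<beta> n * kloosterman (int (l * d * m)) (int n) r)"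
    unfolding bilinB_def sum_distrib_right using sr by simp
  also have "\<dots> = (\<Sum>m=1..M. \<Sum>n=1..N. \<Sum>x\<in>{x. x < r \<and> coprime x r}.
        (\<alpha> m * e_char (real_of_int (int (l*d*m)) * real x / real r)) *
        (\<beta> n * e_char (real_of_int (int n) * real (ix r x) / real r)))"
    unfolding K sum_distrib_left by (simp add: ac_simps)
  also have "\<dots> = (\<Sum>m=1..M. \<Sum>x\<in>{x. x < r \<and> coprime x r}. \<Sum>n=1..N.
        (\<alpha> m * e_char (real_of_int (int (l*d*m)) * real x / real r)) *
        (\<beta> n * e_char (real_of_int (int n) * real (ix r x) / real r)))"
    by (rule sum.cong[OF refl]) (rule sum.swap)
  also have "\<dots> = (\<Sum>x\<in>{x. x < r \<and> coprime x r}. \<Sum>m=1..M. \<Sum>n=1..N.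
        (\<alpha> m * e_char (real_of_int (int (l*d*m)) * real x / real r)) *
        (\<beta> n * e_char (real_of_int (int n) * real (ix r x) / real r)))"
    by (rule sum.swap)
  also have "\<dots> = (\<Sum>x\<in>{x. x < r \<and> coprime x r}.
        (\<Sum>m\<in>{1..M}. \<alpha> m * e_char (real_of_int (int (l*d*m)) * real x / real r)) *
        (\<Sum>n\<in>{1..N}. \<beta> n * e_char (real_of_int (int n) * real (ix r x) / real r)))"
    by (simp add: sum_product)
  finally show ?thesis .
qed

lemma dvd_to_mod:
  assumes "coprime l r" "d dvd p^2" "int r dvd int (l*d*i) - int (l*d*j)"
  shows "(p^2*i) mod r = (p^2*j) mod r"
proof -
  have "int r dvd int l * (int d * (int i - int j))" using assms(3) by (simp add: algebra_simps)
  moreover have "coprime (int r) (int l)" using assms(1) by (simp add: coprime_commute)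
  ultimately have "int r dvd int d * (int i - int j)" using coprime_dvd_mult_right_iff by blast
  moreover have "int d dvd int (p^2)" using assms(2) by (simp only: int_dvd_int_iff)
  ultimately have "int r dvd int (p^2) * (int i - int j)" by (meson dvd_trans mult_dvd_mono dvd_refl)
  hence "int r dvd int (p^2*i) - int (p^2*j)" by (simp add: algebra_simps)
  hence "[p^2*i = p^2*j] (mod r)" by (simp add: cong_iff_dvd_diff cong_int_iff[symmetric] cong_sym_eq)
  thus ?thesis by (simp add: cong_def)
qed

lemma bound_B:
  assumes r: "r > 0" and p: "p > 0" and cop: "coprime l r" and dd: "d dvd p^2"
    and a: "\<forall>m\<in>{1..M}. norm (\<alpha> m) \<le> A" and b: "\<forall>n\<in>{1..N}. norm (\<beta> n) \<le> A'"
  shows "(norm (bilinB \<alpha> \<beta> l d r M N))^2 * real r \<le>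
     (real r * A^2 * (real M * (real (p^2) * real M / real r + 1))) * (real r * A'^2 * (real N * (1 * real N / real r + 1)))"
proof -
  define X where "X = {x. x < r \<and> coprime x r}"
  define U where "U x = (\<Sum>m\<in>{1..M}. \<alpha> m * e_char (real_of_int (int (l*d*m)) * real x / real r))" for x
  define V where "V y = (\<Sum>n\<in>{1..N}. \<beta> n * e_char (real_of_int (int n) * real y / real r))" for y
  have Xs: "X \<subseteq> {..<r}" unfolding X_def by auto
  have finX: "finite X" using Xs finite_subset by blast
  have SU: "(\<Sum>y<r. (norm (U y))^2) \<le> real r * A^2 * (real M * (real (p^2) * real M / real r + 1))"
  proof -
    have "(\<Sum>y<r. (norm (U y))^2) \<le> real r * A^2 * real (card {(i,j). i\<in>{1..M} \<and> j\<in>{1..M} \<and> int r dvd int (l*d*i) - int (l*d*j)})"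
      unfolding U_def by (rule parseval[OF r _ a]) simp
    also have "card {(i,j). i\<in>{1..M} \<and> j\<in>{1..M} \<and> int r dvd int (l*d*i) - int (l*d*j)}
       \<le> card {(i,j). i\<in>{1..M} \<and> j\<in>{1..M} \<and> (p^2*i) mod r = (p^2*j) mod r}"
      by (rule card_mono) (auto intro: finite_subset[of _ "{1..M}\<times>{1..M}"] dvd_to_mod[OF cop dd])
    hence "real r * A^2 * real (card {(i,j). i\<in>{1..M} \<and> j\<in>{1..M} \<and> int r dvd int (l*d*i) - int (l*d*j)})
       \<le> real r * A^2 * real (card {(i,j). i\<in>{1..M} \<and> j\<in>{1..M} \<and> (p^2*i) mod r = (p^2*j) mod r})"
      by (intro mult_left_mono) auto
    also have "\<dots> \<le> real r * A^2 * (real M * (real (p^2) * real M / real r + 1))"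
      by (intro mult_left_mono count_pairs) (use r p in auto)
    finally show ?thesis .
  qed
  have SV: "(\<Sum>y<r. (norm (V y))^2) \<le> real r * A'^2 * (real N * (1 * real N / real r + 1))"
  proof -
    have "(\<Sum>y<r. (norm (V y))^2) \<le> real r * A'^2 * real (card {(i,j). i\<in>{1..N} \<and> j\<in>{1..N} \<and> int r dvd int i - int j})"
      unfolding V_def by (rule parseval[OF r _ b]) simp
    also have "card {(i,j). i\<in>{1..N} \<and> j\<in>{1..N} \<and> int r dvd int i - int j}
       \<le> card {(i,j). i\<in>{1..N} \<and> j\<in>{1..N} \<and> (1*i) mod r = (1*j) mod r}"
      by (rule card_mono) (auto intro: finite_subset[of _ "{1..N}\<times>{1..N}"] simp: cong_iff_dvd_diff[symmetric] cong_int_iff cong_def zmod_int[symmetric])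
    hence "real r * A'^2 * real (card {(i,j). i\<in>{1..N} \<and> j\<in>{1..N} \<and> int r dvd int i - int j})
       \<le> real r * A'^2 * real (card {(i,j). i\<in>{1..N} \<and> j\<in>{1..N} \<and> (1*i) mod r = (1*j) mod r})"
      by (intro mult_left_mono) auto
    also have "\<dots> \<le> real r * A'^2 * (real N * (real 1 * real N / real r + 1))"
      by (intro mult_left_mono count_pairs) (use r in auto)
    finally show ?thesis by simp
  qed
  have eq: "bilinB \<alpha> \<beta> l d r M N * complex_of_real (sqrt (real r)) = (\<Sum>x\<in>X. U x * V (ix r x))"
    unfolding X_def U_def V_def by (rule bilin_eq[OF r])
  have "(norm (bilinB \<alpha> \<beta> l d r M N))^2 * real r = (norm (\<Sum>x\<in>X. U x * V (ix r x)))^2"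
    unfolding eq[symmetric] using r by (simp add: norm_mult power_mult_distrib)
  also have "\<dots> \<le> (\<Sum>x\<in>X. norm (U x) * norm (V (ix r x)))^2"
    by (rule power_mono) (auto intro: order_trans[OF norm_sum] simp: norm_mult)
  also have "\<dots> \<le> (\<Sum>x\<in>X. (norm (U x))^2) * (\<Sum>x\<in>X. (norm (V (ix r x)))^2)"
    by (rule Cauchy_Schwarz_ineq_sum)
  also have "\<dots> \<le> (\<Sum>y<r. (norm (U y))^2) * (\<Sum>y<r. (norm (V y))^2)"
  proof (rule mult_mono)
    show "(\<Sum>x\<in>X. (norm (U x))^2) \<le> (\<Sum>y<r. (norm (U y))^2)"
      by (rule sum_mono2) (use Xs in auto)
    have "(\<Sum>x\<in>X. (norm (V (ix r x)))^2) = (\<Sum>y\<in>ix r ` X. (norm (V y))^2)"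
      using ix_inj[OF r] unfolding X_def by (simp add: sum.reindex)
    also have "\<dots> \<le> (\<Sum>y<r. (norm (V y))^2)"
      by (rule sum_mono2) (use ix_lt[OF r] in auto)
    finally show "(\<Sum>x\<in>X. (norm (V (ix r x)))^2) \<le> (\<Sum>y<r. (norm (V y))^2)" .
  qed (auto intro: sum_nonneg)
  also have "\<dots> \<le> (real r * A^2 * (real M * (real (p^2) * real M / real r + 1))) * (real r * A'^2 * (real N * (1 * real N / real r + 1)))"
    by (rule mult_mono[OF SU SV]) (auto intro: sum_nonneg)
  finally show ?thesis .
qed

lemma pow4: "(x::real) \<ge> 0 \<Longrightarrow> (x powr (1/4))^4 = x"
proof (cases "x = 0")
  case False assume "x \<ge> 0" hence "x > 0" using False by simp
  thus ?thesis by (simp add: powr_realpow[symmetric] powr_powr)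
qed simp

lemma pow2: "(x::real) \<ge> 0 \<Longrightarrow> (x powr (1/2))^2 = x"
proof (cases "x = 0")
  case False assume "x \<ge> 0" hence "x > 0" using False by simp
  thus ?thesis by (simp add: powr_realpow[symmetric] powr_powr)
qed simp

lemma Tlow:
  fixes r s M N :: nat
  assumes "s \<ge> 1" "s \<le> r" "M \<ge> 1" "N \<ge> 1"
  defines "T \<equiv> (real r / real N) powr (1/2) + (real s / real r) powr (1/4) + (real r / (real M ^ 2 * real s)) powr (1/4)"
  shows "real r / real N \<le> T^2" "1 / real r \<le> T^2" "1 / real M \<le> T^2"
proof -
  define a1 where "a1 = (real r / real N) powr (1/2)"
  define a2 where "a2 = (real s / real r) powr (1/4)"
  define a3 where "a3 = (real r / (real M ^ 2 * real s)) powr (1/4)"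
  have T: "T = a1 + a2 + a3" unfolding T_def a1_def a2_def a3_def ..
  have nn: "a1 \<ge> 0" "a2 \<ge> 0" "a3 \<ge> 0" unfolding a1_def a2_def a3_def by auto
  have "a1^2 = real r / real N" unfolding a1_def by (rule pow2) simp
  moreover have "a1^2 \<le> T^2" unfolding T using nn by (intro power_mono) auto
  ultimately show "real r / real N \<le> T^2" by simp
  have r0: "real r > 0" using assms by simp
  have a24: "a2^4 = real s / real r" unfolding a2_def by (rule pow4) simp
  have a2le: "a2 \<le> 1" unfolding a2_def using assms by (intro powr_le1) auto
  have "1 / real r \<le> real s / real r" using assms r0 by (simp add: divide_right_mono)
  also have "\<dots> = a2^4" using a24 by simp
  also have "\<dots> \<le> a2^2" using nn a2le by (simp add: power_decreasing)
  also have "\<dots> \<le> T^2" unfolding T using nn by (intro power_mono) auto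
  finally show "1 / real r \<le> T^2" .
  define w where "w = a2 * a3"
  have "w^4 = a2^4 * a3^4" unfolding w_def by (simp add: power_mult_distrib)
  also have "a3^4 = real r / (real M ^ 2 * real s)" unfolding a3_def by (rule pow4) simp
  finally have "w^4 = (real s / real r) * (real r / (real M ^ 2 * real s))" using a24 by simp
  hence w4: "w^4 = (1 / real M)^2" using assms r0 by (simp add: field_simps power2_eq_square)
  have w0: "w \<ge> 0" unfolding w_def using nn by simp
  have w2: "w^2 = 1 / real M"
  proof -
    have e: "(w^2)^2 = w^4" by simp
    have "(w^2)^2 = (1 / real M)^2" unfolding e by (rule w4)
    thus ?thesis using power2_eq_iff_nonneg[of "w^2" "1 / real M"] by simp
  qed
  have "w \<le> 1"
  proof (rule ccontr)
    assume "\<not> w \<le> 1" hence "w^2 > 1" by (simp add: one_less_power)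
    with w2 assms show False by simp
  qed
  hence "w^2 \<le> w" using w0 by (simp add: power2_eq_square mult_left_le_one_le)
  also have "w \<le> (a2+a3)^2" unfolding w_def using nn by (simp add: power2_eq_square algebra_simps add_nonneg_nonneg)
  also have "\<dots> \<le> T^2" unfolding T using nn by (intro power_mono) auto
  finally show "1 / real M \<le> T^2" using w2 by simp
qed

theorem mainTheorem12:
  fixes p :: nat and c :: "real \<Rightarrow> real" and \<epsilon> :: real
  assumes "prime p" and "\<epsilon> > 0"
  shows "\<exists>C. \<forall>h' l d M N (\<alpha> :: nat \<Rightarrow> complex) (\<beta> :: nat \<Rightarrow> complex).
     h' \<ge> 1 \<longrightarrow> l \<ge> 1 \<longrightarrow> coprime l (p ^ h') \<longrightarrow> d \<in> {1, p, p^2} \<longrightarrow>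
     M \<ge> 1 \<longrightarrow> N \<ge> 1 \<longrightarrow>
     (\<forall>\<delta>>0. \<forall>m\<in>{1..M}. norm (\<alpha> m) \<le> c \<delta> * real m powr \<delta>) \<longrightarrow>
     (\<forall>\<delta>>0. \<forall>n\<in>{1..N}. norm (\<beta> n) \<le> c \<delta> * real n powr \<delta>) \<longrightarrow>
     norm (bilinB \<alpha> \<beta> l d (p ^ h') M N)
       \<le> C * real (M * N * p ^ h') powr \<epsilon> * real M * real N *
          Min ((\<lambda>s. (real (p ^ h') / real N) powr (1/2)
                    + (real s / real (p ^ h')) powr (1/4)
                    + (real (p ^ h') / (real M ^ 2 * real s)) powr (1/4))
               ` {s. s dvd p ^ h'})"
proof (rule exI[of _ "2 * real p * (c \<epsilon>)^2"], intro allI impI)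
  fix h' l d M N and \<alpha> \<beta> :: "nat \<Rightarrow> complex"
  assume h1: "h' \<ge> 1" and l1: "l \<ge> 1" and cop: "coprime l (p ^ h')" and dset: "d \<in> {1, p, p^2}"
    and M1: "M \<ge> 1" and N1: "N \<ge> 1"
    and ha: "\<forall>\<delta>>0. \<forall>m\<in>{1..M}. norm (\<alpha> m) \<le> c \<delta> * real m powr \<delta>"
    and hb: "\<forall>\<delta>>0. \<forall>n\<in>{1..N}. norm (\<beta> n) \<le> c \<delta> * real n powr \<delta>"
  define r where "r = p ^ h'"
  define t where "t s = (real r / real N) powr (1/2) + (real s / real r) powr (1/4)
                    + (real r / (real M ^ 2 * real s)) powr (1/4)" for s :: nat
  define T where "T = Min (t ` {s. s dvd r})"
  define c0 where "c0 = c \<epsilon>"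
  have p2: "p \<ge> 2" using assms(1) by (simp add: prime_ge_2_nat)
  have r0: "r > 0" unfolding r_def using p2 by simp
  have c0: "c0 \<ge> 0"
  proof -
    have "norm (\<alpha> 1) \<le> c \<epsilon> * real 1 powr \<epsilon>" using ha assms(2) M1 by (meson atLeastAtMost_iff le_refl)
    thus ?thesis unfolding c0_def by (metis mult.right_neutral norm_ge_zero of_nat_1 order_trans powr_one_eq_one)
  qed
  define A where "A = c0 * real M powr \<epsilon>"
  define A' where "A' = c0 * real N powr \<epsilon>"
  have a: "\<forall>m\<in>{1..M}. norm (\<alpha> m) \<le> A"
  proof
    fix m assume m: "m \<in> {1..M}"
    have "norm (\<alpha> m) \<le> c0 * real m powr \<epsilon>" using ha assms(2) m unfolding c0_def by auto
    also have "\<dots> \<le> A" unfolding A_def using m c0 assms(2)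
      by (intro mult_left_mono powr_mono2) auto
    finally show "norm (\<alpha> m) \<le> A" .
  qed
  have b: "\<forall>n\<in>{1..N}. norm (\<beta> n) \<le> A'"
  proof
    fix n assume n: "n \<in> {1..N}"
    have "norm (\<beta> n) \<le> c0 * real n powr \<epsilon>" using hb assms(2) n unfolding c0_def by auto
    also have "\<dots> \<le> A'" unfolding A'_def using n c0 assms(2)
      by (intro mult_left_mono powr_mono2) auto
    finally show "norm (\<beta> n) \<le> A'" .
  qed
  have dd: "d dvd p^2" using dset by (auto simp: power2_eq_square)
  have BB: "(norm (bilinB \<alpha> \<beta> l d r M N))^2 * real r \<le>
     (real r * A^2 * (real M * (real (p^2) * real M / real r + 1))) * (real r * A'^2 * (real N * (1 * real N / real r + 1)))"
    by (rule bound_B[OF r0 _ _ dd a b]) (use p2 cop in \<open>auto simp: r_def\<close>)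
  have finD: "finite {s. s dvd r}" using r0 by simp
  have "T \<in> t ` {s. s dvd r}" unfolding T_def by (rule Min_in[OF finite_imageI[OF finD]]) auto
  then obtain s where s: "s dvd r" and Ts: "T = t s" by auto
  have s1: "s \<ge> 1" using s r0 by (cases "s = 0") auto
  have sr: "s \<le> r" using s r0 by (simp add: dvd_imp_le)
  note L = Tlow[OF s1 sr M1 N1, folded t_def Ts]
  have T0: "T \<ge> 0" unfolding Ts t_def by simp
  define Q where "Q = real (p^2) / real r + real (p^2) / real N + 1 / real M + real r / (real M * real N)"
  have QQ: "(real r * A^2 * (real M * (real (p^2) * real M / real r + 1))) * (real r * A'^2 * (real N * (1 * real N / real r + 1)))
      = real r * ((A * A' * real M * real N)^2 * Q)"
    unfolding Q_def using r0 M1 N1 by (simp add: field_simps power2_eq_square)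
  have Qle: "Q \<le> 4 * real p ^ 2 * T^2"
  proof -
    have pp: "real p ^ 2 \<ge> 1" using p2 by simp
    have "real (p^2) / real r \<le> real p^2 * T^2"
      using L(2) pp by (simp add: divide_inverse mult_left_mono)
    moreover have "real (p^2) / real N \<le> real p^2 * T^2"
    proof -
      have "1 / real N \<le> real r / real N" using r0 N1 by (simp add: divide_right_mono)
      hence "1 / real N \<le> T^2" using L(1) by linarith
      thus ?thesis using pp by (simp add: divide_inverse mult_left_mono)
    qed
    moreover have "1 / real M \<le> real p^2 * T^2" using L(3) mult_right_mono[OF pp, of "T^2"] by simp
    moreover have "real r / (real M * real N) \<le> real p^2 * T^2"
    proof -
      have "real r / (real M * real N) \<le> real r / real N" using M1 N1 r0
        by (intro divide_left_mono) auto
      thus ?thesis using L(1) mult_right_mono[OF pp, of "T^2"] by simp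
    qed
    ultimately show ?thesis unfolding Q_def by linarith
  qed
  have "(norm (bilinB \<alpha> \<beta> l d r M N))^2 \<le> (A * A' * real M * real N)^2 * Q"
    using BB r0 unfolding QQ by (simp add: mult.commute[of _ "real r"])
  also have "\<dots> \<le> (A * A' * real M * real N)^2 * (4 * real p ^ 2 * T^2)"
    by (rule mult_left_mono[OF Qle]) simp
  also have "\<dots> = (2 * real p * A * A' * real M * real N * T)^2" by (simp add: power_mult_distrib)
  finally have "norm (bilinB \<alpha> \<beta> l d r M N) \<le> 2 * real p * A * A' * real M * real N * T"
    by (rule power2_le_imp_le) (use c0 T0 in \<open>auto simp: A_def A'_def\<close>)
  also have "\<dots> \<le> 2 * real p * c0^2 * real (M * N * r) powr \<epsilon> * real M * real N * T"
  proof -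
    have "real (M * N * r) powr \<epsilon> = real M powr \<epsilon> * real N powr \<epsilon> * real r powr \<epsilon>"
      by (simp add: powr_mult)
    moreover have r1: "real r powr \<epsilon> \<ge> 1" using r0 assms(2) by (simp add: ge_one_powr_ge_zero)
    ultimately have "real M powr \<epsilon> * real N powr \<epsilon> \<le> real (M * N * r) powr \<epsilon>"
      using mult_left_mono[OF r1, of "real M powr \<epsilon> * real N powr \<epsilon>"] by simp
    hence "A * A' \<le> c0^2 * real (M * N * r) powr \<epsilon>"
      unfolding A_def A'_def using c0 by (simp add: power2_eq_square mult_left_mono ac_simps)
    moreover have K0: "0 \<le> 2 * real p * real M * real N * T" using T0 by simp
    ultimately have "(A * A') * (2 * real p * real M * real N * T) \<le> (c0^2 * real (M * N * r) powr \<epsilon>) * (2 * real p * real M * real N * T)"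
      by (rule mult_right_mono)
    thus ?thesis by (simp add: ac_simps)
  qed
  finally show "norm (bilinB \<alpha> \<beta> l d (p ^ h') M N)
       \<le> 2 * real p * (c \<epsilon>)^2 * real (M * N * p ^ h') powr \<epsilon> * real M * real N *
          Min ((\<lambda>s. (real (p ^ h') / real N) powr (1/2)
                    + (real s / real (p ^ h')) powr (1/4)
                    + (real (p ^ h') / (real M ^ 2 * real s)) powr (1/4))
               ` {s. s dvd p ^ h'})"
    unfolding T_def t_def r_def c0_def .
qed

end
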